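(* An instance $I=(\mathcal{G},k,\ell)$ of Multistage Vertex Cover is a yes-instance if and only if there is a directed path from $s$ to $t$ in the configuration graph of $I$.
   Context: A temporal graph $\mathcal{G}$ is a sequence of layers (static graphs) $(G_1,\dots,G_\tau)$ on a common vertex set $V(\mathcal{G})$. Multistage Vertex Cover: given $\mathcal{G}$ and integers $k\in\mathbb{N}$, $\ell\in\mathbb{N}_0$, where throughout $0<k<|V(\mathcal{G})|$, decide whether there is $(S_1,\dots,S_\tau)$ with each $S_i\subseteq V(\mathcal{G})$ a vertex cover of $G_i$, $|S_i|\le k$, and $|S_i\triangle S_{i+1}|\le\ell$ for $i<\tau$ ($\triangle$ = symmetric difference). The configuration graph of $(\mathcal{G},k,\ell)$ is a directed graph $D$ with vertex set $V_1\uplus\cdots\uplus V_\tau\uplus\{s,t\}$ and a map $\gamma$ from $V_1\uplus\cdots\uplus V_\tau$ to subsets of $V(\mathcal{G})$ of size at most $k$ such that: (i) for every $i\in\{1,\dots,\tau\}$, a set $S$ is a vertex cover of $G_i$ of size exactly $k-1$ or $k$ if and only if there is $v\in V_i$ with $\gamma(v)=S$; (ii) there is an arc from $v$ to $w$ if and only if $v\in V_i$, $w\in V_{i+1}$ for some $i$ and $|\gamma(v)\triangle\gamma(w)|\le\ell$; (iii) there is an arc $(s,v)$ for every $v\in V_1$ and an arc $(v,t)$ for every $v\in V_\tau$ (and no other arcs). *)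

theory Defs
  imports Main
begin

text \<open>A temporal graph on the finite vertex set V is a nonempty list of layers;
each layer is given by its edge set, an edge being a 2-element subset of V.
Layer i of the paper (1-based) is list entry i-1.\<close>

definition temporal_graph :: "'a set \<Rightarrow> 'a set set list \<Rightarrow> bool" where
  "temporal_graph V G \<longleftrightarrow> finite V \<and> G \<noteq> [] \<and>
     (\<forall>E\<in>set G. \<forall>e\<in>E. e \<subseteq> V \<and> card e = 2)"

definition vertex_cover :: "'a set \<Rightarrow> 'a set set \<Rightarrow> 'a set \<Rightarrow> bool" where
  "vertex_cover V E S \<longleftrightarrow> S \<subseteq> V \<and> (\<forall>e\<in>E. e \<inter> S \<noteq> {})"

definition symdiff :: "'a set \<Rightarrow> 'a set \<Rightarrow> 'a set" where
  "symdiff A B = (A - B) \<union> (B - A)"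

definition msvc_yes :: "'a set \<Rightarrow> 'a set set list \<Rightarrow> nat \<Rightarrow> nat \<Rightarrow> bool" where
  "msvc_yes V G k l \<longleftrightarrow> (\<exists>Ss :: 'a set list. length Ss = length G \<and>
     (\<forall>i<length G. vertex_cover V (G ! i) (Ss ! i) \<and> card (Ss ! i) \<le> k) \<and>
     (\<forall>i. Suc i < length G \<longrightarrow> card (symdiff (Ss ! i) (Ss ! Suc i)) \<le> l))"

text \<open>Configuration graph: node sets Vs (Vs ! i is V_{i+1}), source s, sink t,
arc set A and labelling gamma, satisfying properties (i)--(iii).\<close>
definition config_graph ::
  "'a set \<Rightarrow> 'a set set list \<Rightarrow> nat \<Rightarrow> nat \<Rightarrow>
   'b set list \<Rightarrow> 'b \<Rightarrow> 'b \<Rightarrow> ('b \<times> 'b) set \<Rightarrow> ('b \<Rightarrow> 'a set) \<Rightarrow> bool" where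
  "config_graph V G k l Vs s t A \<gamma> \<longleftrightarrow>
     length Vs = length G \<and>
     (\<forall>i<length Vs. \<forall>j<length Vs. i \<noteq> j \<longrightarrow> Vs ! i \<inter> Vs ! j = {}) \<and>
     s \<noteq> t \<and> (\<forall>X\<in>set Vs. s \<notin> X \<and> t \<notin> X) \<and>
     (\<forall>X\<in>set Vs. \<forall>v\<in>X. \<gamma> v \<subseteq> V \<and> card (\<gamma> v) \<le> k) \<and>
     (\<forall>i<length G. \<forall>S. (vertex_cover V (G ! i) S \<and> (card S = k - 1 \<or> card S = k))
                          \<longleftrightarrow> (\<exists>v\<in>Vs ! i. \<gamma> v = S)) \<and>
     A = {(v, w). \<exists>i. Suc i < length Vs \<and> v \<in> Vs ! i \<and> w \<in> Vs ! Suc i \<and>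
                        card (symdiff (\<gamma> v) (\<gamma> w)) \<le> l}
         \<union> {(s, v) | v. v \<in> Vs ! 0}
         \<union> {(v, t) | v. v \<in> Vs ! (length Vs - 1)}"

end

theory Submission
  imports Defs
begin

definition valid :: "'a set \<Rightarrow> 'a set set list \<Rightarrow> nat \<Rightarrow> nat \<Rightarrow> (nat \<Rightarrow> 'a set) \<Rightarrow> bool" where
  "valid V G k l f \<longleftrightarrow> (\<forall>m<length G. vertex_cover V (G!m) (f m) \<and> card (f m) \<le> k) \<and>
     (\<forall>m. Suc m < length G \<longrightarrow> card (symdiff (f m) (f (Suc m))) \<le> l)"

lemma msvc_yes_iff: "msvc_yes V G k l \<longleftrightarrow> (\<exists>f. valid V G k l f)"
proof
  assume "msvc_yes V G k l"
  then obtain Ss where "length Ss = length G" "\<forall>i<length G. vertex_cover V (G ! i) (Ss ! i) \<and> card (Ss ! i) \<le> k"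
    "\<forall>i. Suc i < length G \<longrightarrow> card (symdiff (Ss ! i) (Ss ! Suc i)) \<le> l"
    unfolding msvc_yes_def by blast
  then have "valid V G k l (nth Ss)" unfolding valid_def by blast
  then show "\<exists>f. valid V G k l f" by blast
next
  assume "\<exists>f. valid V G k l f"
  then obtain f where f: "valid V G k l f" by blast
  let ?Ss = "map f [0..<length G]"
  show "msvc_yes V G k l" unfolding msvc_yes_def
    by (rule exI[of _ ?Ss]) (use f in \<open>auto simp: valid_def\<close>)
qed

lemma vc_mono: "vertex_cover V E S \<Longrightarrow> S \<subseteq> T \<Longrightarrow> T \<subseteq> V \<Longrightarrow> vertex_cover V E T"
  unfolding vertex_cover_def by blast

lemma sd_comm: "symdiff A B = symdiff B A"
  unfolding symdiff_def by blast

lemma sd_both: "symdiff (A \<union> X) (B \<union> X) \<subseteq> symdiff A B"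
  unfolding symdiff_def by blast

lemma sd_fin: "finite A \<Longrightarrow> finite B \<Longrightarrow> finite (symdiff A B)"
  unfolding symdiff_def by blast

lemma sd_left:
  assumes "finite A" "finite B" "finite X" "v \<in> X" "v \<in> A" "v \<notin> B" "card (X - {v}) \<le> 1"
  shows "card (symdiff A (B \<union> X)) \<le> card (symdiff A B)"
proof -
  have sub: "symdiff A (B \<union> X) \<subseteq> (symdiff A B - {v}) \<union> (X - {v})"
    using assms unfolding symdiff_def by blast
  have fs: "finite (symdiff A B)" using assms sd_fin by blast
  have vin: "v \<in> symdiff A B" using assms unfolding symdiff_def by blast
  have "card (symdiff A (B \<union> X)) \<le> card ((symdiff A B - {v}) \<union> (X - {v}))"
    by (rule card_mono) (use fs assms sub in auto)
  also have "\<dots> \<le> card (symdiff A B - {v}) + card (X - {v})" by (rule card_Un_le)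
  also have "card (symdiff A B - {v}) = card (symdiff A B) - 1" using vin fs by simp
  finally have "card (symdiff A (B \<union> X)) \<le> card (symdiff A B) - 1 + card (X - {v})" .
  moreover have "card (symdiff A B) \<ge> 1" using vin fs
    by (metis One_nat_def Suc_leI card_gt_0_iff empty_iff)
  ultimately show ?thesis using assms(7) by linarith
qed

lemma exists_p:
  fixes i :: nat
  assumes "P i"
  shows "\<exists>p\<le>i. (\<forall>m. p \<le> m \<and> m \<le> i \<longrightarrow> P m) \<and> (p = 0 \<or> \<not> P (p - 1))"
  using assms
proof (induction i)
  case 0
  then show ?case by auto
next
  case (Suc i)
  show ?case
  proof (cases "P i")
    case True
    from Suc.IH[OF True] obtain p where "p \<le> i" "\<forall>m. p \<le> m \<and> m \<le> i \<longrightarrow> P m" "p = 0 \<or> \<not> P (p - 1)" by blast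
    then show ?thesis using Suc.prems
      by (intro exI[of _ p]) (auto simp: le_Suc_eq)
  next
    case False
    then show ?thesis using Suc.prems by (intro exI[of _ "Suc i"]) auto
  qed
qed

lemma exists_q:
  fixes i :: nat
  assumes "P i" "i < n"
  shows "\<exists>q. i \<le> q \<and> q < n \<and> (\<forall>m. i \<le> m \<and> m \<le> q \<longrightarrow> P m) \<and> (Suc q = n \<or> \<not> P (Suc q))"
  using assms
proof (induction "n - i" arbitrary: i rule: less_induct)
  case less
  show ?case
  proof (cases "Suc i < n \<and> P (Suc i)")
    case True
    then have "n - Suc i < n - i" by linarith
    from less.hyps[OF this] True obtain q where q: "Suc i \<le> q \<and> q < n \<and> (\<forall>m. Suc i \<le> m \<and> m \<le> q \<longrightarrow> P m) \<and> (Suc q = n \<or> \<not> P (Suc q))"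
      by blast
    show ?thesis
    proof (intro exI[of _ q] conjI allI impI)
      fix m assume "i \<le> m \<and> m \<le> q"
      then show "P m" using q less.prems by (cases "m = i") auto
    qed (use q in auto)
  next
    case False
    then show ?thesis using less.prems by (intro exI[of _ i]) auto
  qed
qed


lemma pad_step:
  assumes finV: "finite V" and kV: "k < card V" and f: "valid V G k l f"
    and i: "i < length G" and small: "card (f i) + 2 \<le> k"
  shows "\<exists>g. valid V G k l g \<and> (\<forall>m<length G. f m \<subseteq> g m) \<and> (\<exists>m<length G. card (f m) < card (g m))"
proof -
  let ?n = "length G"
  let ?P = "\<lambda>m. card (f m) + 2 \<le> k"
  have fV: "\<And>m. m < ?n \<Longrightarrow> f m \<subseteq> V" using f unfolding valid_def vertex_cover_def by blast
  have ffin: "\<And>m. m < ?n \<Longrightarrow> finite (f m)" using fV finV finite_subset by blast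
  have fk: "\<And>m. m < ?n \<Longrightarrow> card (f m) \<le> k" using f unfolding valid_def by blast
  obtain p where p: "p \<le> i" "\<forall>m. p \<le> m \<and> m \<le> i \<longrightarrow> ?P m" "p = 0 \<or> \<not> ?P (p - 1)"
    using exists_p[of ?P i] small by blast
  obtain q where q: "i \<le> q" "q < ?n" "\<forall>m. i \<le> m \<and> m \<le> q \<longrightarrow> ?P m" "Suc q = ?n \<or> \<not> ?P (Suc q)"
    using exists_q[of ?P i ?n] small i by blast
  have Pint: "\<And>m. p \<le> m \<Longrightarrow> m \<le> q \<Longrightarrow> ?P m"
    using p q by (meson nat_le_linear)
  have vex: "\<exists>v. v \<in> f (p - 1) \<and> v \<notin> f p" if "0 < p"
  proof (rule ccontr)
    assume "\<not> ?thesis"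
    then have "f (p - 1) \<subseteq> f p" by blast
    then have "card (f (p - 1)) \<le> card (f p)" using ffin[of p] p i by (intro card_mono) auto
    moreover have "?P p" using Pint p q by auto
    ultimately show False using p(3) that by linarith
  qed
  have wex: "\<exists>w. w \<in> f (Suc q) \<and> w \<notin> f q" if "Suc q < ?n"
  proof (rule ccontr)
    assume "\<not> ?thesis"
    then have "f (Suc q) \<subseteq> f q" by blast
    then have "card (f (Suc q)) \<le> card (f q)" using ffin[of q] q by (intro card_mono) auto
    moreover have "?P q" using Pint p q by auto
    ultimately show False using q(4) that by linarith
  qed
  have uex: "\<exists>u. u \<in> V \<and> u \<notin> f i"
  proof (rule ccontr)
    assume "\<not> ?thesis"
    then have "V \<subseteq> f i" by blast
    then have "card V \<le> card (f i)" using ffin[OF i] by (intro card_mono) auto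
    then show False using kV fk[OF i] by linarith
  qed
  have "\<exists>X. X \<subseteq> V \<and> finite X \<and> card X \<le> 2 \<and>
     (0 < p \<longrightarrow> (\<exists>v\<in>X. v \<in> f (p - 1) \<and> v \<notin> f p \<and> card (X - {v}) \<le> 1)) \<and>
     (Suc q < ?n \<longrightarrow> (\<exists>w\<in>X. w \<in> f (Suc q) \<and> w \<notin> f q \<and> card (X - {w}) \<le> 1)) \<and>
     (\<exists>j. p \<le> j \<and> j \<le> q \<and> \<not> X \<subseteq> f j)"
  proof (cases "0 < p")
    case True
    then obtain v where v: "v \<in> f (p - 1)" "v \<notin> f p" using vex by blast
    have "p - 1 < ?n" using p i by linarith
    then have vV: "v \<in> V" using v fV[of "p - 1"] by blast
    show ?thesis
    proof (cases "Suc q < ?n")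
      case True2: True
      then obtain w where w: "w \<in> f (Suc q)" "w \<notin> f q" using wex by blast
      have wV: "w \<in> V" using w fV[of "Suc q"] True2 by auto
      have c1: "card ({v, w} - {v}) \<le> 1"
        using card_mono[of "{w}" "{v, w} - {v}"] by auto
      have c2: "card ({v, w} - {w}) \<le> 1"
        using card_mono[of "{v}" "{v, w} - {w}"] by auto
      have c3: "card {v, w} \<le> 2" by (simp add: card_insert_le_m1)
      show ?thesis
        by (rule exI[of _ "{v, w}"]) (use vV wV v w c1 c2 c3 p q in auto)
    next
      case False
      show ?thesis
        by (rule exI[of _ "{v}"]) (use vV v False p q in auto)
    qed
  next
    case False
    show ?thesis
    proof (cases "Suc q < ?n")
      case True2: True
      then obtain w where w: "w \<in> f (Suc q)" "w \<notin> f q" using wex by blast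
      have wV: "w \<in> V" using w fV[of "Suc q"] True2 by auto
      show ?thesis
        by (rule exI[of _ "{w}"]) (use wV w False True2 p q in auto)
    next
      case False2: False
      obtain u where u: "u \<in> V" "u \<notin> f i" using uex by blast
      show ?thesis
        by (rule exI[of _ "{u}"]) (use u False False2 p q in auto)
    qed
  qed
  then obtain X where X: "X \<subseteq> V" "finite X" "card X \<le> 2"
    "0 < p \<longrightarrow> (\<exists>v\<in>X. v \<in> f (p - 1) \<and> v \<notin> f p \<and> card (X - {v}) \<le> 1)"
    "Suc q < ?n \<longrightarrow> (\<exists>w\<in>X. w \<in> f (Suc q) \<and> w \<notin> f q \<and> card (X - {w}) \<le> 1)"
    and j: "\<exists>j. p \<le> j \<and> j \<le> q \<and> \<not> X \<subseteq> f j"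
    by blast
  define g where "g m = (if p \<le> m \<and> m \<le> q then f m \<union> X else f m)" for m
  have sub: "\<forall>m<?n. f m \<subseteq> g m" unfolding g_def by auto
  have gV: "\<And>m. m < ?n \<Longrightarrow> g m \<subseteq> V" using fV X unfolding g_def by auto
  have gfin: "\<And>m. m < ?n \<Longrightarrow> finite (g m)" using gV finV finite_subset by blast
  have gk: "card (g m) \<le> k" if "m < ?n" for m
  proof (cases "p \<le> m \<and> m \<le> q")
    case True
    then have "card (g m) \<le> card (f m) + card X" unfolding g_def by (simp add: card_Un_le)
    then show ?thesis using Pint True X(3) by fastforce
  next
    case False
    then have "g m = f m" unfolding g_def by auto
    then show ?thesis using fk that by simp
  qed
  have gvc: "vertex_cover V (G!m) (g m)" if "m < ?n" for m
    using vc_mono[of V "G!m" "f m" "g m"] f that sub gV unfolding valid_def by blast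
  have gsd: "card (symdiff (g m) (g (Suc m))) \<le> l" if m: "Suc m < ?n" for m
  proof -
    have fl: "card (symdiff (f m) (f (Suc m))) \<le> l" using f m unfolding valid_def by blast
    have fin1: "finite (f m)" "finite (f (Suc m))" using ffin m by auto
    consider "p \<le> m \<and> Suc m \<le> q" | "Suc m = p" | "m = q" | "\<not> (p \<le> m \<and> m \<le> q) \<and> \<not> (p \<le> Suc m \<and> Suc m \<le> q)"
      by linarith
    then show ?thesis
    proof cases
      case 1
      then have "g m = f m \<union> X" "g (Suc m) = f (Suc m) \<union> X" unfolding g_def by auto
      then have "symdiff (g m) (g (Suc m)) \<subseteq> symdiff (f m) (f (Suc m))"
        using sd_both by metis
      then have "card (symdiff (g m) (g (Suc m))) \<le> card (symdiff (f m) (f (Suc m)))"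
        using fin1 sd_fin by (intro card_mono) auto
      then show ?thesis using fl by linarith
    next
      case 2
      then have gm: "g m = f m" and gs: "g (Suc m) = f (Suc m) \<union> X"
        unfolding g_def using p q by auto
      from 2 X(4) obtain v where v: "v \<in> X" "v \<in> f m" "v \<notin> f (Suc m)" "card (X - {v}) \<le> 1"
        by auto
      have "card (symdiff (f m) (f (Suc m) \<union> X)) \<le> card (symdiff (f m) (f (Suc m)))"
        by (rule sd_left) (use fin1 X v in auto)
      then show ?thesis using fl gm gs by simp
    next
      case 3
      then have gm: "g m = f m \<union> X" and gs: "g (Suc m) = f (Suc m)"
        unfolding g_def using p q by auto
      from 3 X(5) m obtain w where w: "w \<in> X" "w \<in> f (Suc m)" "w \<notin> f m" "card (X - {w}) \<le> 1"
        by auto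
      have "card (symdiff (f (Suc m)) (f m \<union> X)) \<le> card (symdiff (f (Suc m)) (f m))"
        by (rule sd_left) (use fin1 X w in auto)
      moreover have "symdiff (g m) (g (Suc m)) = symdiff (f (Suc m)) (f m \<union> X)"
        unfolding gm gs by (rule sd_comm)
      ultimately show ?thesis using fl sd_comm[of "f (Suc m)" "f m"] by simp
    next
      case 4
      then have "g m = f m" "g (Suc m) = f (Suc m)" unfolding g_def by auto
      then show ?thesis using fl by simp
    qed
  qed
  have gvalid: "valid V G k l g" unfolding valid_def using gk gvc gsd by blast
  from j obtain j0 where j0: "p \<le> j0" "j0 \<le> q" "\<not> X \<subseteq> f j0" by blast
  have j0n: "j0 < ?n" using j0 q by linarith
  have "f j0 \<subset> g j0" using j0 unfolding g_def by auto
  then have "card (f j0) < card (g j0)" using gfin[OF j0n] by (intro psubset_card_mono) auto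
  then show ?thesis using gvalid sub j0n by blast
qed


lemma pad:
  assumes finV: "finite V" and kV: "k < card V"
  shows "valid V G k l f \<Longrightarrow> \<exists>g. valid V G k l g \<and> (\<forall>m<length G. k \<le> card (g m) + 1)"
proof (induction "\<Sum>m<length G. k - card (f m)" arbitrary: f rule: less_induct)
  case less
  show ?case
  proof (cases "\<forall>m<length G. k \<le> card (f m) + 1")
    case True
    then show ?thesis using less.prems by blast
  next
    case False
    then obtain i where i: "i < length G" "\<not> k \<le> card (f i) + 1" by blast
    then have i2: "card (f i) + 2 \<le> k" by linarith
    from pad_step[OF finV kV less.prems i(1) i2] obtain g where
      g: "valid V G k l g" "\<forall>m<length G. f m \<subseteq> g m" "\<exists>m<length G. card (f m) < card (g m)"
      by blast
    have gk: "\<And>m. m < length G \<Longrightarrow> card (g m) \<le> k" using g(1) unfolding valid_def by blast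
    have gfin: "\<And>m. m < length G \<Longrightarrow> finite (g m)"
      using g(1) finV finite_subset unfolding valid_def vertex_cover_def by blast
    have le: "\<And>m. m < length G \<Longrightarrow> card (f m) \<le> card (g m)"
      by (rule card_mono) (use g(2) gfin in auto)
    obtain m0 where m0: "m0 < length G" "card (f m0) < card (g m0)" using g(3) by blast
    have "(\<Sum>m<length G. k - card (g m)) < (\<Sum>m<length G. k - card (f m))"
    proof (rule sum_strict_mono_ex1)
      show "\<forall>x\<in>{..<length G}. k - card (g x) \<le> k - card (f x)" using le by (simp add: diff_le_mono2)
      show "\<exists>a\<in>{..<length G}. k - card (g a) < k - card (f a)"
        using m0 gk[OF m0(1)] by (intro bexI[of _ m0]) auto
    qed simp
    from less.hyps[OF this g(1)] show ?thesis .
  qed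
qed

theorem lemma14:
  fixes V :: "'a set" and G :: "'a set set list" and k l :: nat
    and Vs :: "'b set list" and s t :: 'b and A :: "('b \<times> 'b) set" and \<gamma> :: "'b \<Rightarrow> 'a set"
  assumes "temporal_graph V G"
    and "0 < k" and "k < card V"
    and "config_graph V G k l Vs s t A \<gamma>"
  shows "msvc_yes V G k l \<longleftrightarrow> (s, t) \<in> A\<^sup>+"
proof -
  let ?n = "length G"
  have finV: "finite V" and Gne: "G \<noteq> []" using assms(1) unfolding temporal_graph_def by auto
  have n1: "0 < ?n" using Gne by simp
  note C = assms(4)[unfolded config_graph_def]
  have lenVs: "length Vs = ?n" using C by (rule conjunct1)
  have D: "\<forall>i<length Vs. \<forall>j<length Vs. i \<noteq> j \<longrightarrow> Vs ! i \<inter> Vs ! j = {}"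
    using C[THEN conjunct2] by (rule conjunct1)
  have st: "s \<noteq> t" using C[THEN conjunct2, THEN conjunct2] by (rule conjunct1)
  have ST: "\<forall>X\<in>set Vs. s \<notin> X \<and> t \<notin> X" using C[THEN conjunct2, THEN conjunct2, THEN conjunct2] by (rule conjunct1)
  have GA: "\<forall>X\<in>set Vs. \<forall>v\<in>X. \<gamma> v \<subseteq> V \<and> card (\<gamma> v) \<le> k"
    using C[THEN conjunct2, THEN conjunct2, THEN conjunct2, THEN conjunct2] by (rule conjunct1)
  have CF: "\<forall>i<length G. \<forall>S. (vertex_cover V (G ! i) S \<and> (card S = k - 1 \<or> card S = k))
                          \<longleftrightarrow> (\<exists>v\<in>Vs ! i. \<gamma> v = S)"
    using C[THEN conjunct2, THEN conjunct2, THEN conjunct2, THEN conjunct2, THEN conjunct2] by (rule conjunct1)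
  have AD: "A = {(v, w). \<exists>i. Suc i < length Vs \<and> v \<in> Vs ! i \<and> w \<in> Vs ! Suc i \<and>
                        card (symdiff (\<gamma> v) (\<gamma> w)) \<le> l}
         \<union> {(s, v) | v. v \<in> Vs ! 0}
         \<union> {(v, t) | v. v \<in> Vs ! (length Vs - 1)}"
    using C[THEN conjunct2, THEN conjunct2, THEN conjunct2, THEN conjunct2, THEN conjunct2] by (rule conjunct2)
  have disj: "\<And>i j x. i < ?n \<Longrightarrow> j < ?n \<Longrightarrow> x \<in> Vs!i \<Longrightarrow> x \<in> Vs!j \<Longrightarrow> i = j"
  proof (rule ccontr)
    fix i j x assume "i < ?n" "j < ?n" "x \<in> Vs!i" "x \<in> Vs!j" "i \<noteq> j"
    then have "Vs ! i \<inter> Vs ! j = {}" using D lenVs by simp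
    then show False using \<open>x \<in> Vs!i\<close> \<open>x \<in> Vs!j\<close> by blast
  qed
  have snot: "\<And>i. i < ?n \<Longrightarrow> s \<notin> Vs!i" and tnot: "\<And>i. i < ?n \<Longrightarrow> t \<notin> Vs!i"
    using ST lenVs nth_mem by fastforce+
  have gam: "\<And>i v. i < ?n \<Longrightarrow> v \<in> Vs!i \<Longrightarrow> \<gamma> v \<subseteq> V \<and> card (\<gamma> v) \<le> k"
    using GA lenVs nth_mem by fastforce
  have cfg: "\<And>i S. i < ?n \<Longrightarrow> (vertex_cover V (G ! i) S \<and> (card S = k - 1 \<or> card S = k))
                          \<longleftrightarrow> (\<exists>v\<in>Vs ! i. \<gamma> v = S)"
    using CF by blast
  have Adef: "A = {(v, w). \<exists>i. Suc i < ?n \<and> v \<in> Vs ! i \<and> w \<in> Vs ! Suc i \<and>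
                        card (symdiff (\<gamma> v) (\<gamma> w)) \<le> l}
         \<union> {(s, v) | v. v \<in> Vs ! 0}
         \<union> {(v, t) | v. v \<in> Vs ! (?n - 1)}"
    using AD unfolding lenVs .
  show ?thesis
  proof
    assume "msvc_yes V G k l"
    then obtain f where f: "valid V G k l f" using msvc_yes_iff by blast
    from pad[OF finV assms(3) f] obtain g where g: "valid V G k l g" "\<forall>m<?n. k \<le> card (g m) + 1"
      by blast
    have "\<forall>m<?n. \<exists>v\<in>Vs!m. \<gamma> v = g m"
    proof (intro allI impI)
      fix m assume m: "m < ?n"
      have "vertex_cover V (G ! m) (g m) \<and> card (g m) \<le> k" using g(1) m unfolding valid_def by blast
      then have "vertex_cover V (G ! m) (g m) \<and> (card (g m) = k - 1 \<or> card (g m) = k)"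
        using g(2) m by force
      then show "\<exists>v\<in>Vs!m. \<gamma> v = g m" using cfg[OF m] by blast
    qed
    then obtain h where h: "\<And>m. m < ?n \<Longrightarrow> h m \<in> Vs!m \<and> \<gamma> (h m) = g m" by metis
    have path: "m < ?n \<Longrightarrow> (s, h m) \<in> A\<^sup>+" for m
    proof (induction m)
      case 0
      then have "(s, h 0) \<in> A" using h[of 0] unfolding Adef by blast
      then show ?case by blast
    next
      case (Suc m)
      then have "(s, h m) \<in> A\<^sup>+" by simp
      moreover have "(h m, h (Suc m)) \<in> A"
      proof -
        have "card (symdiff (g m) (g (Suc m))) \<le> l" using g(1) Suc.prems unfolding valid_def by blast
        then show ?thesis using h[of m] h[of "Suc m"] Suc.prems unfolding Adef by auto
      qed
      ultimately show ?case by (rule trancl_into_trancl)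
    qed
    have nl: "?n - 1 < ?n" using n1 by simp
    have "h (?n - 1) \<in> Vs ! (?n - 1)" using h[OF nl] by blast
    then have "(h (?n - 1), t) \<in> A" unfolding Adef by (intro UnI2) blast
    with path[OF nl] show "(s, t) \<in> A\<^sup>+" by (rule trancl_into_trancl)
  next
    assume "(s, t) \<in> A\<^sup>+"
    define pv where "pv i f \<longleftrightarrow> (\<forall>j\<le>i. vertex_cover V (G!j) (f j) \<and> card (f j) \<le> k) \<and>
       (\<forall>j<i. card (symdiff (f j) (f (Suc j))) \<le> l)" for i and f :: "nat \<Rightarrow> 'a set"
    have arcE: "\<And>x y. (x, y) \<in> A \<Longrightarrow> (\<exists>i. Suc i < ?n \<and> x \<in> Vs ! i \<and> y \<in> Vs ! Suc i \<and>
                        card (symdiff (\<gamma> x) (\<gamma> y)) \<le> l) \<or> (x = s \<and> y \<in> Vs!0) \<or> (y = t \<and> x \<in> Vs!(?n - 1))"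
      unfolding Adef by blast
    have vcg: "\<And>i v. i < ?n \<Longrightarrow> v \<in> Vs!i \<Longrightarrow> vertex_cover V (G!i) (\<gamma> v) \<and> card (\<gamma> v) \<le> k"
    proof -
      fix i v assume iv: "i < ?n" "v \<in> Vs!i"
      then have "vertex_cover V (G ! i) (\<gamma> v) \<and> (card (\<gamma> v) = k - 1 \<or> card (\<gamma> v) = k)"
        using cfg[OF iv(1), of "\<gamma> v"] by blast
      then show "vertex_cover V (G!i) (\<gamma> v) \<and> card (\<gamma> v) \<le> k" using gam[OF iv] by blast
    qed
    have main: "(s, w) \<in> A\<^sup>+ \<Longrightarrow> (w = t \<and> msvc_yes V G k l) \<or> (\<exists>i<?n. w \<in> Vs!i \<and> (\<exists>f. pv i f \<and> f i = \<gamma> w))" for w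
    proof (induction rule: trancl_induct)
      case (base y)
      from arcE[OF base] show ?case
      proof (elim disjE)
        assume "\<exists>i. Suc i < ?n \<and> s \<in> Vs ! i \<and> y \<in> Vs ! Suc i \<and> card (symdiff (\<gamma> s) (\<gamma> y)) \<le> l"
        then obtain i where "Suc i < ?n" "s \<in> Vs ! i" by blast
        then show ?thesis using snot[of i] by simp
      next
        assume "s = s \<and> y \<in> Vs!0"
        then have "pv 0 (\<lambda>_. \<gamma> y)" unfolding pv_def using vcg[of 0 y] n1 by auto
        then show ?thesis using n1 \<open>s = s \<and> y \<in> Vs!0\<close> by blast
      next
        assume "y = t \<and> s \<in> Vs!(?n - 1)"
        then show ?thesis using snot[of "?n - 1"] n1 by simp
      qed
    next
      case (step y z)
      have ynt: "y \<noteq> t"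
      proof
        assume "y = t"
        from arcE[OF step(2)[unfolded this]] show False
        proof (elim disjE)
          assume "\<exists>i. Suc i < ?n \<and> t \<in> Vs ! i \<and> z \<in> Vs ! Suc i \<and> card (symdiff (\<gamma> t) (\<gamma> z)) \<le> l"
          then obtain i where "Suc i < ?n" "t \<in> Vs ! i" by blast
          then show False using tnot[of i] by simp
        next
          assume "t = s \<and> z \<in> Vs!0" then show False using st by simp
        next
          assume "z = t \<and> t \<in> Vs!(?n - 1)" then show False using tnot[of "?n - 1"] n1 by simp
        qed
      qed
      with step(3) obtain i f where i: "i < ?n" "y \<in> Vs!i" "pv i f" "f i = \<gamma> y" by blast
      from arcE[OF step(2)] show ?case
      proof (elim disjE)
        assume "\<exists>i. Suc i < ?n \<and> y \<in> Vs ! i \<and> z \<in> Vs ! Suc i \<and> card (symdiff (\<gamma> y) (\<gamma> z)) \<le> l"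
        then obtain i' where i': "Suc i' < ?n" "y \<in> Vs ! i'" "z \<in> Vs ! Suc i'" "card (symdiff (\<gamma> y) (\<gamma> z)) \<le> l"
          by blast
        have "i' = i" using disj[of i' i y] i i' by simp
        define f' where "f' = f(Suc i := \<gamma> z)"
        have "pv (Suc i) f'"
          unfolding pv_def
        proof (rule conjI; intro allI impI)
          fix j assume "j \<le> Suc i"
          then show "vertex_cover V (G ! j) (f' j) \<and> card (f' j) \<le> k"
            using i(3) vcg[of "Suc i" z] i' \<open>i' = i\<close> unfolding pv_def f'_def
            by (cases "j = Suc i") auto
        next
          fix j assume "j < Suc i"
          then show "card (symdiff (f' j) (f' (Suc j))) \<le> l"
            using i(3,4) i'(4) \<open>i' = i\<close> unfolding pv_def f'_def
            by (cases "j = i") auto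
        qed
        moreover have "f' (Suc i) = \<gamma> z" unfolding f'_def by simp
        ultimately show ?thesis using i' \<open>i' = i\<close> by blast
      next
        assume "y = s \<and> z \<in> Vs!0"
        then show ?thesis using i snot by blast
      next
        assume a: "z = t \<and> y \<in> Vs!(?n - 1)"
        then have "i = ?n - 1" using disj[of i "?n - 1" y] i n1 by simp
        then have "\<forall>m<?n. m \<le> i" "\<forall>m. Suc m < ?n \<longrightarrow> m < i" by auto
        then have "valid V G k l f" using i(3) unfolding pv_def valid_def by blast
        then show ?thesis using a msvc_yes_iff by blast
      qed
    qed
    from main[OF \<open>(s, t) \<in> A\<^sup>+\<close>] show "msvc_yes V G k l"
      using tnot by blast
  qed
qed

end
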